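(* Let $\mathcal B$ be the variety generated by all algebras $(L,t)$ where $L$ is a lattice and $t(x,y,z)=x\wedge(y\vee z)$, and let $\mathcal B^d$ be the variety generated by such algebras with $L$ a distributive lattice. Then neither $\mathcal B$ nor $\mathcal B^d$ is $5$-reversed-modular. Moreover the congruence identities $\alpha(\beta\circ\gamma)\subseteq\alpha(\gamma\circ\beta)\circ\alpha(\gamma\circ\beta)$ and $\alpha(\beta\circ\gamma)\subseteq\gamma\circ\alpha\beta\circ\alpha\gamma\circ\beta$ fail both in $\mathcal B$ and in $\mathcal B^d$. In particular neither $\mathcal B$ nor $\mathcal B^d$ is $4$-alvin.
   Context: Reversed Day terms: $4$-ary $u_0,\dots,u_m$ with $u_k(x,y,y,x)=x$ for all $k$, $u_0(x,y,z,w)=x$, $u_m(x,y,z,w)=w$, $u_k(x,x,w,w)=u_{k+1}(x,x,w,w)$ for odd $k$, $u_k(x,y,y,w)=u_{k+1}(x,y,y,w)$ for even $k$ ($0\le k<m$); $m$-reversed-modular means having such $u_0,\dots,u_m$. Alvin terms: ternary $t_0,\dots,t_n$ with $t_0(x,y,z)=x$, $t_n(x,y,z)=z$, $t_h(x,y,x)=x$ for all $h$, $t_h(x,z,z)=t_{h+1}(x,z,z)$ for even $h$, $t_h(x,x,z)=t_{h+1}(x,x,z)$ for odd $h$; $n$-alvin means having such $t_0,\dots,t_n$. In congruence identities juxtaposition is intersection and $\circ$ composition. *)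

theory Defs
  imports Main
begin

datatype trm = Var nat | Op trm trm trm

fun vars :: "trm \<Rightarrow> nat set" where
  "vars (Var i) = {i}"
| "vars (Op a b c) = vars a \<union> vars b \<union> vars c"

fun subst :: "(nat \<Rightarrow> trm) \<Rightarrow> trm \<Rightarrow> trm" where
  "subst \<sigma> (Var i) = \<sigma> i"
| "subst \<sigma> (Op a b c) = Op (subst \<sigma> a) (subst \<sigma> b) (subst \<sigma> c)"

fun eval :: "('a \<Rightarrow> 'a \<Rightarrow> 'a \<Rightarrow> 'a) \<Rightarrow> (nat \<Rightarrow> 'a) \<Rightarrow> trm \<Rightarrow> 'a" where
  "eval f \<rho> (Var i) = \<rho> i"
| "eval f \<rho> (Op a b c) = f (eval f \<rho> a) (eval f \<rho> b) (eval f \<rho> c)"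

definition args3 :: "trm \<Rightarrow> trm \<Rightarrow> trm \<Rightarrow> nat \<Rightarrow> trm" where
  "args3 a b c = (\<lambda>i. if i = 0 then a else if i = 1 then b else c)"

definition args4 :: "trm \<Rightarrow> trm \<Rightarrow> trm \<Rightarrow> trm \<Rightarrow> nat \<Rightarrow> trm" where
  "args4 a b c d = (\<lambda>i. if i = 0 then a else if i = 1 then b else if i = 2 then c else d)"

abbreviation "vx \<equiv> Var 0"
abbreviation "vy \<equiv> Var 1"
abbreviation "vz \<equiv> Var 2"
abbreviation "vw \<equiv> Var 3"

type_synonym 'a alg = "'a set \<times> ('a \<Rightarrow> 'a \<Rightarrow> 'a \<Rightarrow> 'a)"

definition is_alg :: "'a alg \<Rightarrow> bool" where
  "is_alg B \<longleftrightarrow> (\<forall>x\<in>fst B. \<forall>y\<in>fst B. \<forall>z\<in>fst B. snd B x y z \<in> fst B)"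

definition satisfies :: "'a alg \<Rightarrow> trm \<Rightarrow> trm \<Rightarrow> bool" where
  "satisfies B s t \<longleftrightarrow> (\<forall>\<rho>. (\<forall>i. \<rho> i \<in> fst B) \<longrightarrow> eval (snd B) \<rho> s = eval (snd B) \<rho> t)"

text \<open>Variety generated by a class K = Mod(Id(K)) (Birkhoff's HSP theorem).\<close>
definition in_variety :: "'a alg set \<Rightarrow> 'a alg \<Rightarrow> bool" where
  "in_variety K B \<longleftrightarrow> is_alg B \<and>
     (\<forall>s t. (\<forall>C\<in>K. satisfies C s t) \<longrightarrow> satisfies B s t)"

definition var_models :: "'a alg set \<Rightarrow> trm \<Rightarrow> trm \<Rightarrow> bool" where
  "var_models K s t \<longleftrightarrow> (\<forall>B. in_variety K B \<longrightarrow> satisfies B s t)"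

definition reversed_modular :: "'a alg set \<Rightarrow> nat \<Rightarrow> bool" where
  "reversed_modular K m \<longleftrightarrow> (\<exists>u :: nat \<Rightarrow> trm.
     (\<forall>k\<le>m. vars (u k) \<subseteq> {..<4}) \<and>
     (\<forall>k\<le>m. var_models K (subst (args4 vx vy vy vx) (u k)) vx) \<and>
     var_models K (u 0) vx \<and>
     var_models K (u m) vw \<and>
     (\<forall>k<m. odd k \<longrightarrow>
        var_models K (subst (args4 vx vx vw vw) (u k)) (subst (args4 vx vx vw vw) (u (Suc k)))) \<and>
     (\<forall>k<m. even k \<longrightarrow>
        var_models K (subst (args4 vx vy vy vw) (u k)) (subst (args4 vx vy vy vw) (u (Suc k)))))"

definition alvin :: "'a alg set \<Rightarrow> nat \<Rightarrow> bool" where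
  "alvin K n \<longleftrightarrow> (\<exists>t :: nat \<Rightarrow> trm.
     (\<forall>h\<le>n. vars (t h) \<subseteq> {..<3}) \<and>
     var_models K (t 0) vx \<and>
     var_models K (t n) vz \<and>
     (\<forall>h\<le>n. var_models K (subst (args3 vx vy vx) (t h)) vx) \<and>
     (\<forall>h<n. even h \<longrightarrow>
        var_models K (subst (args3 vx vz vz) (t h)) (subst (args3 vx vz vz) (t (Suc h)))) \<and>
     (\<forall>h<n. odd h \<longrightarrow>
        var_models K (subst (args3 vx vx vz) (t h)) (subst (args3 vx vx vz) (t (Suc h)))))"

definition congruence :: "'a alg \<Rightarrow> 'a rel \<Rightarrow> bool" where
  "congruence B \<theta> \<longleftrightarrow> equiv (fst B) \<theta> \<and>
     (\<forall>a a' b b' c c'. (a,a') \<in> \<theta> \<longrightarrow> (b,b') \<in> \<theta> \<longrightarrow> (c,c') \<in> \<theta> \<longrightarrow>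
        (snd B a b c, snd B a' b' c') \<in> \<theta>)"

definition cong_id_fails :: "'a alg set \<Rightarrow> ('a rel \<Rightarrow> 'a rel \<Rightarrow> 'a rel \<Rightarrow> bool) \<Rightarrow> bool" where
  "cong_id_fails K P \<longleftrightarrow> (\<exists>B \<alpha> \<beta> \<gamma>. in_variety K B \<and>
     congruence B \<alpha> \<and> congruence B \<beta> \<and> congruence B \<gamma> \<and> \<not> P \<alpha> \<beta> \<gamma>)"

definition is_lattice :: "'a set \<Rightarrow> ('a \<Rightarrow> 'a \<Rightarrow> 'a) \<Rightarrow> ('a \<Rightarrow> 'a \<Rightarrow> 'a) \<Rightarrow> bool" where
  "is_lattice L m j \<longleftrightarrow> L \<noteq> {} \<and>
     (\<forall>x\<in>L. \<forall>y\<in>L. m x y \<in> L \<and> j x y \<in> L) \<and>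
     (\<forall>x\<in>L. \<forall>y\<in>L. m x y = m y x \<and> j x y = j y x) \<and>
     (\<forall>x\<in>L. \<forall>y\<in>L. \<forall>z\<in>L. m (m x y) z = m x (m y z) \<and> j (j x y) z = j x (j y z)) \<and>
     (\<forall>x\<in>L. \<forall>y\<in>L. m x (j x y) = x \<and> j x (m x y) = x)"

definition is_distrib_lattice :: "'a set \<Rightarrow> ('a \<Rightarrow> 'a \<Rightarrow> 'a) \<Rightarrow> ('a \<Rightarrow> 'a \<Rightarrow> 'a) \<Rightarrow> bool" where
  "is_distrib_lattice L m j \<longleftrightarrow> is_lattice L m j \<and>
     (\<forall>x\<in>L. \<forall>y\<in>L. \<forall>z\<in>L. m x (j y z) = j (m x y) (m x z))"

definition KB :: "nat alg set" where
  "KB = {(L, \<lambda>x y z. m x (j y z)) | L m j. is_lattice L m j}"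

definition KBd :: "nat alg set" where
  "KBd = {(L, \<lambda>x y z. m x (j y z)) | L m j. is_distrib_lattice L m j}"

definition cid1 :: "'a rel \<Rightarrow> 'a rel \<Rightarrow> 'a rel \<Rightarrow> bool" where
  "cid1 \<alpha> \<beta> \<gamma> \<longleftrightarrow> \<alpha> \<inter> (\<beta> O \<gamma>) \<subseteq> (\<alpha> \<inter> (\<gamma> O \<beta>)) O (\<alpha> \<inter> (\<gamma> O \<beta>))"

definition cid2 :: "'a rel \<Rightarrow> 'a rel \<Rightarrow> 'a rel \<Rightarrow> bool" where
  "cid2 \<alpha> \<beta> \<gamma> \<longleftrightarrow> \<alpha> \<inter> (\<beta> O \<gamma>) \<subseteq> \<gamma> O (\<alpha> \<inter> \<beta>) O (\<alpha> \<inter> \<gamma>) O \<beta>"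

end

theory Submission
  imports Defs
begin

unbundle bit_operations_syntax

lemma eval_subst: "eval f \<rho> (subst \<sigma> s) = eval f (\<lambda>i. eval f \<rho> (\<sigma> i)) s"
  by (induction s) auto

lemma eval_cong:
  assumes "congruence Alg \<theta>" "\<And>i. (\<rho> i, \<rho>' i) \<in> \<theta>"
  shows "(eval (snd Alg) \<rho> s, eval (snd Alg) \<rho>' s) \<in> \<theta>"
  using assms by (induction s) (auto simp: congruence_def)

definition mk4 :: "'a \<Rightarrow> 'a \<Rightarrow> 'a \<Rightarrow> 'a \<Rightarrow> nat \<Rightarrow> 'a" where
  "mk4 p q r s = (\<lambda>i. if i = 0 then p else if i = 1 then q else if i = 2 then r else s)"

definition mk3 :: "'a \<Rightarrow> 'a \<Rightarrow> 'a \<Rightarrow> nat \<Rightarrow> 'a" where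
  "mk3 p q r = (\<lambda>i. if i = 0 then p else if i = 1 then q else r)"

lemma eval_args4:
  "(\<lambda>i. eval f (mk4 p q r s) (args4 (Var a) (Var b) (Var c) (Var d) i))
     = mk4 (mk4 p q r s a) (mk4 p q r s b) (mk4 p q r s c) (mk4 p q r s d)"
  by (auto simp: args4_def mk4_def)

lemma eval_args3:
  "(\<lambda>i. eval f (mk3 p q r) (args3 (Var a) (Var b) (Var c) i))
     = mk3 (mk3 p q r a) (mk3 p q r b) (mk3 p q r c)"
  by (auto simp: args3_def mk3_def)

lemma var_models_use:
  assumes "var_models K s t" "in_variety K Alg" "\<And>i. \<rho> i \<in> fst Alg"
  shows "eval (snd Alg) \<rho> s = eval (snd Alg) \<rho> t"
  using assms unfolding var_models_def satisfies_def by blast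

lemma mk4_in: "p \<in> A \<Longrightarrow> q \<in> A \<Longrightarrow> r \<in> A \<Longrightarrow> s \<in> A \<Longrightarrow> mk4 p q r s i \<in> A"
  by (auto simp: mk4_def)

lemma mk3_in: "p \<in> A \<Longrightarrow> q \<in> A \<Longrightarrow> r \<in> A \<Longrightarrow> mk3 p q r i \<in> A"
  by (auto simp: mk3_def)

lemma cong_refl: "congruence Alg \<theta> \<Longrightarrow> x \<in> fst Alg \<Longrightarrow> (x,x) \<in> \<theta>"
  unfolding congruence_def equiv_def refl_on_def by blast

lemma cong_sym: "congruence Alg \<theta> \<Longrightarrow> (x,y) \<in> \<theta> \<Longrightarrow> (y,x) \<in> \<theta>"
  unfolding congruence_def equiv_def sym_def by blast

lemma cong_trans: "congruence Alg \<theta> \<Longrightarrow> (x,y) \<in> \<theta> \<Longrightarrow> (y,z) \<in> \<theta> \<Longrightarrow> (x,z) \<in> \<theta>"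
  unfolding congruence_def equiv_def trans_def by blast

lemma cong_mk4:
  assumes "congruence Alg \<theta>" "(p,p') \<in> \<theta>" "(q,q') \<in> \<theta>" "(r,r') \<in> \<theta>" "(s,s') \<in> \<theta>"
  shows "(eval (snd Alg) (mk4 p q r s) t, eval (snd Alg) (mk4 p' q' r' s') t) \<in> \<theta>"
  by (rule eval_cong[OF assms(1)]) (use assms in \<open>auto simp: mk4_def\<close>)

lemma cong_mk3:
  assumes "congruence Alg \<theta>" "(p,p') \<in> \<theta>" "(q,q') \<in> \<theta>" "(r,r') \<in> \<theta>"
  shows "(eval (snd Alg) (mk3 p q r) t, eval (snd Alg) (mk3 p' q' r') t) \<in> \<theta>"
  by (rule eval_cong[OF assms(1)]) (use assms in \<open>auto simp: mk3_def\<close>)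

lemma mk4_simps[simp]: "mk4 p q r s 0 = p" "mk4 p q r s 1 = q" "mk4 p q r s (Suc 0) = q" "mk4 p q r s 2 = r" "mk4 p q r s 3 = s"
  by (auto simp: mk4_def)

lemma mk3_simps[simp]: "mk3 p q r 0 = p" "mk3 p q r 1 = q" "mk3 p q r (Suc 0) = q" "mk3 p q r 2 = r"
  by (auto simp: mk3_def)

lemma rm_chain:
  assumes rm: "reversed_modular K 5" and V: "in_variety K Alg"
    and ca: "congruence Alg \<alpha>" and cb: "congruence Alg \<beta>" and cg: "congruence Alg \<gamma>"
    and inA: "A \<in> fst Alg" "B \<in> fst Alg" "C \<in> fst Alg" "D \<in> fst Alg"
    and h: "(A,B) \<in> \<beta>" "(C,D) \<in> \<beta>" "(B,C) \<in> \<alpha>" "(B,C) \<in> \<gamma>" "(A,D) \<in> \<alpha>"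
  shows "(A,D) \<in> (\<alpha>\<inter>\<gamma>) O (\<alpha>\<inter>\<beta>) O (\<alpha>\<inter>\<gamma>) O (\<alpha>\<inter>\<beta>) O (\<alpha>\<inter>\<gamma>)"
proof -
  obtain u where
    u1: "\<forall>k\<le>5. var_models K (subst (args4 vx vy vy vx) (u k)) vx" and
    u2: "var_models K (u 0) vx" and u3: "var_models K (u 5) vw" and
    u4: "\<forall>k<5. odd k \<longrightarrow>
        var_models K (subst (args4 vx vx vw vw) (u k)) (subst (args4 vx vx vw vw) (u (Suc k)))" and
    u5: "\<forall>k<5. even k \<longrightarrow>
        var_models K (subst (args4 vx vy vy vw) (u k)) (subst (args4 vx vy vy vw) (u (Suc k)))"
    using rm unfolding reversed_modular_def by blast
  define f where "f = snd Alg"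
  define U where "U k = eval f (mk4 A B C D) (u k)" for k
  have rho: "\<And>i. mk4 A B C D i \<in> fst Alg" by (rule mk4_in) (use inA in auto)
  have rA: "(A,A) \<in> \<theta>" "(B,B) \<in> \<theta>" if "congruence Alg \<theta>" for \<theta>
    using cong_refl[OF that] inA by auto
  have U0: "U 0 = A" using var_models_use[where \<rho>="mk4 A B C D", OF u2 V rho] by (simp add: U_def f_def)
  have U5: "U 5 = D" using var_models_use[where \<rho>="mk4 A B C D", OF u3 V rho] by (simp add: U_def f_def)
  have Ua: "(U k, A) \<in> \<alpha>" if "k \<le> 5" for k
  proof -
    have "(U k, eval f (mk4 A B B A) (u k)) \<in> \<alpha>"
      unfolding U_def f_def
      by (rule cong_mk4[OF ca rA(1)[OF ca] rA(2)[OF ca] cong_sym[OF ca h(3)] cong_sym[OF ca h(5)]])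
    moreover have "eval f (mk4 A B B A) (u k) = A"
      using var_models_use[where \<rho>="mk4 A B C D", OF u1[rule_format, OF that] V rho]
      by (simp add: eval_subst eval_args4 f_def)
    ultimately show ?thesis by simp
  qed
  have Uaa: "(U k, U (Suc k)) \<in> \<alpha>" if "k < 5" for k
  proof -
    have "(U k, A) \<in> \<alpha>" using that by (intro Ua) simp
    moreover have "(A, U (Suc k)) \<in> \<alpha>" using cong_sym[OF ca Ua[of "Suc k"]] that by simp
    ultimately show ?thesis using cong_trans[OF ca] by blast
  qed
  have Ug: "(U k, U (Suc k)) \<in> \<gamma>" if "k < 5" "even k" for k
  proof -
    have "(U k, eval f (mk4 A B B D) (u k)) \<in> \<gamma>"
      unfolding U_def f_def
      by (rule cong_mk4[OF cg rA(1)[OF cg] rA(2)[OF cg] cong_sym[OF cg h(4)] cong_refl[OF cg inA(4)]])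
    moreover have "(eval f (mk4 A B B D) (u (Suc k)), U (Suc k)) \<in> \<gamma>"
      unfolding U_def f_def
      by (rule cong_mk4[OF cg rA(1)[OF cg] rA(2)[OF cg] h(4) cong_refl[OF cg inA(4)]])
    moreover have "eval f (mk4 A B B D) (u k) = eval f (mk4 A B B D) (u (Suc k))"
      using var_models_use[where \<rho>="mk4 A B C D", OF u5[rule_format, OF that] V rho]
      by (simp add: eval_subst eval_args4 f_def)
    ultimately show ?thesis using cong_trans[OF cg] by metis
  qed
  have Ub: "(U k, U (Suc k)) \<in> \<beta>" if "k < 5" "odd k" for k
  proof -
    have "(U k, eval f (mk4 A A D D) (u k)) \<in> \<beta>"
      unfolding U_def f_def
      by (rule cong_mk4[OF cb rA(1)[OF cb] cong_sym[OF cb h(1)] h(2) cong_refl[OF cb inA(4)]])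
    moreover have "(eval f (mk4 A A D D) (u (Suc k)), U (Suc k)) \<in> \<beta>"
      unfolding U_def f_def
      by (rule cong_mk4[OF cb rA(1)[OF cb] h(1) cong_sym[OF cb h(2)] cong_refl[OF cb inA(4)]])
    moreover have "eval f (mk4 A A D D) (u k) = eval f (mk4 A A D D) (u (Suc k))"
      using var_models_use[where \<rho>="mk4 A B C D", OF u4[rule_format, OF that] V rho]
      by (simp add: eval_subst eval_args4 f_def)
    ultimately show ?thesis using cong_trans[OF cb] by metis
  qed
  have "(U 0, U 5) \<in> (\<alpha>\<inter>\<gamma>) O (\<alpha>\<inter>\<beta>) O (\<alpha>\<inter>\<gamma>) O (\<alpha>\<inter>\<beta>) O (\<alpha>\<inter>\<gamma>)"
  proof -
    have c0: "(U 0, U 1) \<in> \<alpha>\<inter>\<gamma>" using Uaa[of 0] Ug[of 0, simplified] by (simp add: numeral_eq_Suc)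
    have c1: "(U 1, U 2) \<in> \<alpha>\<inter>\<beta>" using Uaa[of 1] Ub[of 1, simplified] by (simp add: numeral_eq_Suc)
    have c2: "(U 2, U 3) \<in> \<alpha>\<inter>\<gamma>" using Uaa[of 2] Ug[of 2, simplified] by (simp add: numeral_eq_Suc)
    have c3: "(U 3, U 4) \<in> \<alpha>\<inter>\<beta>" using Uaa[of 3] Ub[of 3, simplified] by (simp add: numeral_eq_Suc)
    have c4: "(U 4, U 5) \<in> \<alpha>\<inter>\<gamma>" using Uaa[of 4] Ug[of 4, simplified] by (simp add: numeral_eq_Suc)
    show ?thesis using c0 c1 c2 c3 c4 by blast
  qed
  then show ?thesis using U0 U5 by simp
qed

lemma alvin_chain:
  assumes al: "alvin K 4" and V: "in_variety K Alg"
    and ca: "congruence Alg \<alpha>" and cb: "congruence Alg \<beta>" and cg: "congruence Alg \<gamma>"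
    and inA: "A \<in> fst Alg" "B \<in> fst Alg" "C \<in> fst Alg"
    and h: "(A,B) \<in> \<beta>" "(B,C) \<in> \<gamma>" "(A,C) \<in> \<alpha>"
  shows "(A,C) \<in> (\<alpha>\<inter>\<gamma>) O (\<alpha>\<inter>\<beta>) O (\<alpha>\<inter>\<gamma>) O (\<alpha>\<inter>\<beta>)"
proof -
  obtain t where
    t2: "var_models K (t 0) vx" and t3: "var_models K (t 4) vz" and
    t1: "\<forall>h\<le>4. var_models K (subst (args3 vx vy vx) (t h)) vx" and
    t5: "\<forall>h<4. even h \<longrightarrow>
        var_models K (subst (args3 vx vz vz) (t h)) (subst (args3 vx vz vz) (t (Suc h)))" and
    t4: "\<forall>h<4. odd h \<longrightarrow>
        var_models K (subst (args3 vx vx vz) (t h)) (subst (args3 vx vx vz) (t (Suc h)))"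
    using al unfolding alvin_def by blast
  define f where "f = snd Alg"
  define U where "U k = eval f (mk3 A B C) (t k)" for k
  have rho: "\<And>i. mk3 A B C i \<in> fst Alg" by (rule mk3_in) (use inA in auto)
  have rA: "(A,A) \<in> \<theta>" "(B,B) \<in> \<theta>" "(C,C) \<in> \<theta>" if "congruence Alg \<theta>" for \<theta>
    using cong_refl[OF that] inA by auto
  have U0: "U 0 = A" using var_models_use[where \<rho>="mk3 A B C", OF t2 V rho] by (simp add: U_def f_def)
  have U4: "U 4 = C" using var_models_use[where \<rho>="mk3 A B C", OF t3 V rho] by (simp add: U_def f_def)
  have Ua: "(U k, A) \<in> \<alpha>" if "k \<le> 4" for k
  proof -
    have "(U k, eval f (mk3 A B A) (t k)) \<in> \<alpha>"
      unfolding U_def f_def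
      by (rule cong_mk3[OF ca rA(1)[OF ca] rA(2)[OF ca] cong_sym[OF ca h(3)]])
    moreover have "eval f (mk3 A B A) (t k) = A"
      using var_models_use[where \<rho>="mk3 A B C", OF t1[rule_format, OF that] V rho]
      by (simp add: eval_subst eval_args3 f_def)
    ultimately show ?thesis by simp
  qed
  have Uaa: "(U k, U (Suc k)) \<in> \<alpha>" if "k < 4" for k
  proof -
    have "(U k, A) \<in> \<alpha>" using that by (intro Ua) simp
    moreover have "(A, U (Suc k)) \<in> \<alpha>" using cong_sym[OF ca Ua[of "Suc k"]] that by simp
    ultimately show ?thesis using cong_trans[OF ca] by blast
  qed
  have Ug: "(U k, U (Suc k)) \<in> \<gamma>" if "k < 4" "even k" for k
  proof -
    have "(U k, eval f (mk3 A C C) (t k)) \<in> \<gamma>"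
      unfolding U_def f_def
      by (rule cong_mk3[OF cg rA(1)[OF cg] h(2) rA(3)[OF cg]])
    moreover have "(eval f (mk3 A C C) (t (Suc k)), U (Suc k)) \<in> \<gamma>"
      unfolding U_def f_def
      by (rule cong_mk3[OF cg rA(1)[OF cg] cong_sym[OF cg h(2)] rA(3)[OF cg]])
    moreover have "eval f (mk3 A C C) (t k) = eval f (mk3 A C C) (t (Suc k))"
      using var_models_use[where \<rho>="mk3 A B C", OF t5[rule_format, OF that] V rho]
      by (simp add: eval_subst eval_args3 f_def)
    ultimately show ?thesis using cong_trans[OF cg] by metis
  qed
  have Ub: "(U k, U (Suc k)) \<in> \<beta>" if "k < 4" "odd k" for k
  proof -
    have "(U k, eval f (mk3 A A C) (t k)) \<in> \<beta>"
      unfolding U_def f_def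
      by (rule cong_mk3[OF cb rA(1)[OF cb] cong_sym[OF cb h(1)] rA(3)[OF cb]])
    moreover have "(eval f (mk3 A A C) (t (Suc k)), U (Suc k)) \<in> \<beta>"
      unfolding U_def f_def
      by (rule cong_mk3[OF cb rA(1)[OF cb] h(1) rA(3)[OF cb]])
    moreover have "eval f (mk3 A A C) (t k) = eval f (mk3 A A C) (t (Suc k))"
      using var_models_use[where \<rho>="mk3 A B C", OF t4[rule_format, OF that] V rho]
      by (simp add: eval_subst eval_args3 f_def)
    ultimately show ?thesis using cong_trans[OF cb] by metis
  qed
  have "(U 0, U 4) \<in> (\<alpha>\<inter>\<gamma>) O (\<alpha>\<inter>\<beta>) O (\<alpha>\<inter>\<gamma>) O (\<alpha>\<inter>\<beta>)"
  proof -
    have c0: "(U 0, U 1) \<in> \<alpha>\<inter>\<gamma>" using Uaa[of 0] Ug[of 0, simplified] by (simp add: numeral_eq_Suc)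
    have c1: "(U 1, U 2) \<in> \<alpha>\<inter>\<beta>" using Uaa[of 1] Ub[of 1, simplified] by (simp add: numeral_eq_Suc)
    have c2: "(U 2, U 3) \<in> \<alpha>\<inter>\<gamma>" using Uaa[of 2] Ug[of 2, simplified] by (simp add: numeral_eq_Suc)
    have c3: "(U 3, U 4) \<in> \<alpha>\<inter>\<beta>" using Uaa[of 3] Ub[of 3, simplified] by (simp add: numeral_eq_Suc)
    show ?thesis using c0 c1 c2 c3 by blast
  qed
  then show ?thesis using U0 U4 by simp
qed


section \<open>The concrete algebras\<close>

definition tt :: "nat \<Rightarrow> nat \<Rightarrow> nat \<Rightarrow> nat" where
  "tt x y z = x AND (y OR z)"

lemma distrib_nat: "is_distrib_lattice (UNIV::nat set) (AND) (OR)"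
  unfolding is_distrib_lattice_def is_lattice_def
  apply (intro conjI ballI)
  apply (auto simp: and.commute or.commute and.assoc or.assoc)
  apply (auto intro!: bit_eqI simp: bit_and_iff bit_or_iff)
  done

lemma tt_eq: "(\<lambda>x y z. x AND (y OR z)) = tt"
  by (intro ext) (simp add: tt_def)

lemma lat_nat: "is_lattice (UNIV::nat set) (AND) (OR)"
  using distrib_nat unfolding is_distrib_lattice_def by blast

lemma UNIV_KBd: "(UNIV, tt) \<in> KBd"
  unfolding KBd_def mem_Collect_eq
  by (rule exI[of _ UNIV], rule exI[of _ "(AND)"], rule exI[of _ "(OR)"])
     (intro conjI, simp_all only: tt_eq distrib_nat)

lemma UNIV_KB: "(UNIV, tt) \<in> KB"
  unfolding KB_def mem_Collect_eq
  by (rule exI[of _ UNIV], rule exI[of _ "(AND)"], rule exI[of _ "(OR)"])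
     (intro conjI, simp_all only: tt_eq lat_nat)

lemma in_var:
  assumes "(UNIV, tt) \<in> K" and cl: "\<forall>a\<in>S. \<forall>b\<in>S. \<forall>c\<in>S. tt a b c \<in> S"
  shows "in_variety K (S, tt)"
  unfolding in_variety_def is_alg_def
proof (intro conjI allI impI)
  show "\<forall>x\<in>fst (S, tt). \<forall>y\<in>fst (S, tt). \<forall>z\<in>fst (S, tt). snd (S, tt) x y z \<in> fst (S, tt)"
    using cl by simp
  fix s t assume "\<forall>C\<in>K. satisfies C s t"
  then have "satisfies (UNIV, tt) s t" using assms(1) by blast
  then show "satisfies (S, tt) s t" unfolding satisfies_def by simp
qed

definition kern :: "nat list \<Rightarrow> nat \<Rightarrow> nat rel" where
  "kern L m = {(u,v). u \<in> set L \<and> v \<in> set L \<and> u AND m = v AND m}"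

lemma tt_mask: "tt u v w AND m = tt (u AND m) (v AND m) (w AND m) AND m"
  unfolding tt_def by (auto intro!: bit_eqI simp: bit_and_iff bit_or_iff)

lemma tt_mask_eq: assumes "a AND m = a' AND m" "b AND m = b' AND m" "c AND m = c' AND m"
  shows "tt a b c AND m = tt a' b' c' AND m"
  using tt_mask[of a b c m] tt_mask[of a' b' c' m] assms by metis

lemma kern_equiv: "equiv (set L) (kern L m)"
  unfolding equiv_def refl_on_def sym_def trans_def kern_def by auto

lemma kern_cong:
  assumes cl: "\<forall>a\<in>set L. \<forall>b\<in>set L. \<forall>c\<in>set L. tt a b c \<in> set L"
  shows "congruence (set L, tt) (kern L m)"
  unfolding congruence_def fst_conv snd_conv
proof (intro conjI allI impI kern_equiv)
  fix a a' b b' c c'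
  assume "(a, a') \<in> kern L m" "(b, b') \<in> kern L m" "(c, c') \<in> kern L m"
  then have h: "a \<in> set L" "a' \<in> set L" "b \<in> set L" "b' \<in> set L" "c \<in> set L" "c' \<in> set L"
    "a AND m = a' AND m" "b AND m = b' AND m" "c AND m = c' AND m"
    unfolding kern_def by blast+
  have e: "tt a b c AND m = tt a' b' c' AND m" using h(7,8,9) by (rule tt_mask_eq)
  have m1: "tt a b c \<in> set L" using cl h(1,3,5) by simp
  have m2: "tt a' b' c' \<in> set L" using cl h(2,4,6) by simp
  show "(tt a b c, tt a' b' c') \<in> kern L m"
    unfolding kern_def using e m1 m2 by simp
qed

lemma mask_or_eq: "u AND (m1 OR m2) = v AND (m1 OR m2) \<longleftrightarrow> (u AND m1 = v AND m1 \<and> u AND m2 = (v::nat) AND m2)"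
  by (auto simp: bit_eq_iff bit_and_iff bit_or_iff)

lemma kern_Int: "kern L m1 \<inter> kern L m2 = kern L (m1 OR m2)"
  unfolding kern_def using mask_or_eq by blast

lemma kern_Image: "kern L m `` X = set (filter (\<lambda>v. \<exists>u\<in>X. u \<in> set L \<and> v AND m = u AND m) L)"
  unfolding kern_def by auto

lemma Int_Image_single: "(R \<inter> S) `` {a} = R `` {a} \<inter> S `` {a}"
  by auto

lemma Image_insert': "R `` insert a A = R `` {a} \<union> R `` A"
  by auto

lemma mem_via_Image: "(a, d) \<in> R \<Longrightarrow> d \<in> R `` {a}"
  by simp


lemma Image_insert2: "R `` insert a (insert b B) = R `` {a} \<union> R `` insert b B"
  by auto

definition L1 :: "nat list" where "L1 = [128, 136, 160, 168, 170, 192, 200, 204, 224, 240]"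

lemma L1_closed: "\<forall>a\<in>set L1. \<forall>b\<in>set L1. \<forall>c\<in>set L1. tt a b c \<in> set L1"
  by (simp add: L1_def tt_def)

definition L2 :: "nat list" where "L2 = [0, 2, 4, 6, 10, 14, 16, 18, 20, 21, 46]"

lemma L2_closed: "\<forall>a\<in>set L2. \<forall>b\<in>set L2. \<forall>c\<in>set L2. tt a b c \<in> set L2"
  by (simp add: L2_def tt_def)

lemma n_alvin: "(240, 170) \<notin> (kern L1 165 \<inter> kern L1 153) O (kern L1 165 \<inter> kern L1 195) O
    (kern L1 165 \<inter> kern L1 153) O (kern L1 165 \<inter> kern L1 195)"
proof
  assume "(240, 170) \<in> (kern L1 165 \<inter> kern L1 153) O (kern L1 165 \<inter> kern L1 195) O
    (kern L1 165 \<inter> kern L1 153) O (kern L1 165 \<inter> kern L1 195)"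
  from mem_via_Image[OF this] show False
    by (simp add: relcomp_Image kern_Int kern_Image L1_def)
qed

lemma n_cid2: "(240, 170) \<notin> kern L1 153 O (kern L1 165 \<inter> kern L1 195) O
    (kern L1 165 \<inter> kern L1 153) O kern L1 195"
proof
  assume "(240, 170) \<in> kern L1 153 O (kern L1 165 \<inter> kern L1 195) O
    (kern L1 165 \<inter> kern L1 153) O kern L1 195"
  from mem_via_Image[OF this] show False
    by (simp add: relcomp_Image kern_Int kern_Image L1_def)
qed

lemma n_cid1: "(240, 170) \<notin> (kern L1 165 \<inter> (kern L1 153 O kern L1 195)) O
    (kern L1 165 \<inter> (kern L1 153 O kern L1 195))"
proof
  assume "(240, 170) \<in> (kern L1 165 \<inter> (kern L1 153 O kern L1 195)) O
    (kern L1 165 \<inter> (kern L1 153 O kern L1 195))"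
  from mem_via_Image[OF this] show False
    by (simp add: relcomp_Image Int_Image_single Image_insert2 kern_Image L1_def)
qed

lemma n_rm: "(21, 46) \<notin> (kern L2 4 \<inter> kern L2 39) O (kern L2 4 \<inter> kern L2 24) O
    (kern L2 4 \<inter> kern L2 39) O (kern L2 4 \<inter> kern L2 24) O (kern L2 4 \<inter> kern L2 39)"
proof
  assume "(21, 46) \<in> (kern L2 4 \<inter> kern L2 39) O (kern L2 4 \<inter> kern L2 24) O
    (kern L2 4 \<inter> kern L2 39) O (kern L2 4 \<inter> kern L2 24) O (kern L2 4 \<inter> kern L2 39)"
  from mem_via_Image[OF this] show False
    by (simp add: relcomp_Image kern_Int kern_Image L2_def)
qed


lemma main_K:
  assumes K: "(UNIV, tt) \<in> K"
  shows "\<not> reversed_modular K 5 \<and> cong_id_fails K cid1 \<and> cong_id_fails K cid2 \<and> \<not> alvin K 4"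
proof -
  have V1: "in_variety K (set L1, tt)" by (rule in_var[OF K L1_closed])
  have V2: "in_variety K (set L2, tt)" by (rule in_var[OF K L2_closed])
  have c1: "congruence (set L1, tt) (kern L1 m)" for m by (rule kern_cong[OF L1_closed])
  have c2: "congruence (set L2, tt) (kern L2 m)" for m by (rule kern_cong[OF L2_closed])
  have p1: "(240,170) \<in> kern L1 165" "(240,204) \<in> kern L1 195" "(204,170) \<in> kern L1 153"
    "(240::nat) \<in> fst (set L1, tt)" "(204::nat) \<in> fst (set L1, tt)" "(170::nat) \<in> fst (set L1, tt)"
    by (simp_all add: kern_def L1_def)
  have p2: "(21::nat) \<in> fst (set L2, tt)" "(18::nat) \<in> fst (set L2, tt)"
    "(10::nat) \<in> fst (set L2, tt)" "(46::nat) \<in> fst (set L2, tt)"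
    "(21,18) \<in> kern L2 24" "(10,46) \<in> kern L2 24" "(18,10) \<in> kern L2 4" "(18,10) \<in> kern L2 39"
    "(21,46) \<in> kern L2 4"
    by (simp_all add: kern_def L2_def)
  have r1: "\<not> reversed_modular K 5"
  proof
    assume rm: "reversed_modular K 5"
    have "(21, 46) \<in> (kern L2 4 \<inter> kern L2 39) O (kern L2 4 \<inter> kern L2 24) O
      (kern L2 4 \<inter> kern L2 39) O (kern L2 4 \<inter> kern L2 24) O (kern L2 4 \<inter> kern L2 39)"
      by (rule rm_chain[where \<alpha>="kern L2 4" and \<beta>="kern L2 24" and \<gamma>="kern L2 39",
            OF rm V2 c2 c2 c2 p2])
    then show False using n_rm by blast
  qed
  have r2: "\<not> alvin K 4"
  proof
    assume al: "alvin K 4"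
    have "(240, 170) \<in> (kern L1 165 \<inter> kern L1 153) O (kern L1 165 \<inter> kern L1 195) O
      (kern L1 165 \<inter> kern L1 153) O (kern L1 165 \<inter> kern L1 195)"
      by (rule alvin_chain[where \<alpha>="kern L1 165" and \<beta>="kern L1 195" and \<gamma>="kern L1 153",
            OF al V1 c1 c1 c1 p1(4,5,6) p1(2,3,1)])
    then show False using n_alvin by blast
  qed
  have "\<not> cid1 (kern L1 165) (kern L1 195) (kern L1 153)"
    unfolding cid1_def using p1(1,2,3) n_cid1 by blast
  then have r3: "cong_id_fails K cid1"
    unfolding cong_id_fails_def using V1 c1 by blast
  have "\<not> cid2 (kern L1 165) (kern L1 195) (kern L1 153)"
    unfolding cid2_def using p1(1,2,3) n_cid2 by blast
  then have r4: "cong_id_fails K cid2"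
    unfolding cong_id_fails_def using V1 c1 by blast
  show ?thesis using r1 r2 r3 r4 by blast
qed

theorem proposition3p6:
  shows "\<not> reversed_modular KB 5 \<and> \<not> reversed_modular KBd 5 \<and>
         cong_id_fails KB cid1 \<and> cong_id_fails KBd cid1 \<and>
         cong_id_fails KB cid2 \<and> cong_id_fails KBd cid2 \<and>
         \<not> alvin KB 4 \<and> \<not> alvin KBd 4"
  using main_K[OF UNIV_KB] main_K[OF UNIV_KBd] by blast

end
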